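(* Let $\mu$ be in the relative interior of $\Delta$. If an updating rule respects the Blackwell order for $\mu$ and $\varphi^{\mu}(\mu)\neq\mu$, then there exists $x\neq\mu$ at which $\varphi^{\mu}$ has an expansive error.
   Context: Let $\Theta$ be a finite set of states, $|\Theta|=n\ge2$, and $\Delta=\Delta(\Theta)$ the simplex of beliefs. An experiment $\pi:\Theta\to\Delta(S)$ ($S$ finite) with prior $\mu$ induces the Bayesian distribution over posteriors $\rho_B$, a finitely supported distribution on $\Delta$ with mean $\mu$ (every such distribution arises from some experiment). Blackwell order: $\pi\succeq\pi'$ iff $\rho_B'$ is a mean-preserving contraction of $\rho_B$. An updating rule is given, for each prior $\mu$, by a distortion function $\varphi^{\mu}:\Delta\to\Delta$: when the Bayesian posterior is $x$, the decision maker holds belief $\varphi^{\mu}(x)$. For a compact action set $A$, continuous $u:A\times\Theta\to\mathbb{R}$, and consistent choice $a^*:\Delta\to A$ (i.e. $a^*(y)\in\arg\max_{a}\mathbb{E}_y u(a,\theta)$ for all $y$), let $W(x)=\mathbb{E}_x u(a^*(\varphi^{\mu}(x)),\theta)$. The rule respects the Blackwell order for $\mu$ if for all such $A,u,a^*$ and all $\pi\succeq\pi'$, $\mathbb{E}_{\rho_B}W\ge\mathbb{E}_{\rho_B'}W$. $\varphi^{\mu}$ has an expansive error at $x$ if $\varphi^{\mu}(x)$ does not lie on the closed line segment between $x$ and $\mu$. *)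

theory Defs
  imports "HOL-Analysis.Analysis" "HOL-Probability.Probability_Mass_Function"
begin

definition beliefs :: "(real^'n::finite) set" where
  "beliefs = {x. (\<forall>i. 0 \<le> x $ i) \<and> (\<Sum>i\<in>UNIV. x $ i) = 1}"

definition pmean :: "(real^'n::finite) pmf \<Rightarrow> real^'n" where
  "pmean \<rho> = (\<Sum>x\<in>set_pmf \<rho>. pmf \<rho> x *\<^sub>R x)"

text \<open>Distributions over posteriors induced by some experiment under prior mu:
  finitely supported distributions on the beliefs with mean mu.\<close>
definition posterior_dist :: "(real^'n::finite) \<Rightarrow> (real^'n) pmf \<Rightarrow> bool" where
  "posterior_dist \<mu> \<rho> \<longleftrightarrow> finite (set_pmf \<rho>) \<and> set_pmf \<rho> \<subseteq> beliefs \<and> pmean \<rho> = \<mu>"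

definition mp_contraction :: "(real^'n::finite) pmf \<Rightarrow> (real^'n) pmf \<Rightarrow> bool" where
  "mp_contraction \<rho>' \<rho> \<longleftrightarrow>
     (\<exists>K. (\<forall>y\<in>set_pmf \<rho>'. finite (set_pmf (K y)) \<and> set_pmf (K y) \<subseteq> beliefs \<and> pmean (K y) = y)
          \<and> \<rho> = bind_pmf \<rho>' K)"

definition eu :: "('b \<Rightarrow> 'n \<Rightarrow> real) \<Rightarrow> (real^'n::finite) \<Rightarrow> 'b \<Rightarrow> real" where
  "eu u y a = (\<Sum>\<theta>\<in>UNIV. y $ \<theta> * u a \<theta>)"

definition consistent_choice ::
  "'b set \<Rightarrow> ('b \<Rightarrow> 'n \<Rightarrow> real) \<Rightarrow> ((real^'n::finite) \<Rightarrow> 'b) \<Rightarrow> bool" where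
  "consistent_choice A u astar \<longleftrightarrow>
     (\<forall>y\<in>beliefs. astar y \<in> A \<and> (\<forall>a\<in>A. eu u y a \<le> eu u y (astar y)))"

definition Wval :: "((real^'n::finite) \<Rightarrow> real^'n) \<Rightarrow> ('b \<Rightarrow> 'n \<Rightarrow> real) \<Rightarrow> (real^'n \<Rightarrow> 'b)
     \<Rightarrow> real^'n \<Rightarrow> real" where
  "Wval \<phi> u astar x = eu u x (astar (\<phi> x))"

definition pexp :: "(real^'n::finite) pmf \<Rightarrow> (real^'n \<Rightarrow> real) \<Rightarrow> real" where
  "pexp \<rho> f = (\<Sum>x\<in>set_pmf \<rho>. pmf \<rho> x * f x)"

text \<open>Actions are taken WLOG as points of real^'n (payoff vectors).\<close>
definition respects_blackwell :: "(real^'n::finite) \<Rightarrow> (real^'n \<Rightarrow> real^'n) \<Rightarrow> bool" where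
  "respects_blackwell \<mu> \<phi> \<longleftrightarrow>
     (\<forall>(A :: (real^'n) set) (u :: real^'n \<Rightarrow> 'n \<Rightarrow> real) astar \<rho> \<rho>'.
        compact A \<and> (\<forall>\<theta>. continuous_on A (\<lambda>a. u a \<theta>)) \<and> consistent_choice A u astar
        \<and> posterior_dist \<mu> \<rho> \<and> posterior_dist \<mu> \<rho>' \<and> mp_contraction \<rho>' \<rho>
        \<longrightarrow> pexp \<rho> (Wval \<phi> u astar) \<ge> pexp \<rho>' (Wval \<phi> u astar))"

definition expansive_error :: "(real^'n::finite) \<Rightarrow> (real^'n \<Rightarrow> real^'n) \<Rightarrow> real^'n \<Rightarrow> bool" where
  "expansive_error \<mu> \<phi> x \<longleftrightarrow> \<phi> x \<notin> closed_segment x \<mu>"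

end

theory Submission
  imports Defs
begin

lemma pexp_integral:
  assumes "finite (set_pmf \<rho>)"
  shows "pexp \<rho> f = measure_pmf.expectation \<rho> f"
  unfolding pexp_def
  by (subst integral_measure_pmf_real[of "set_pmf \<rho>"]) (auto simp: assms mult.commute)

lemma pmean_comp:
  "pmean \<rho> $ i = pexp \<rho> (\<lambda>x. x $ i)"
  unfolding pmean_def pexp_def by (simp add: sum_component)

lemma pexp_bern:
  "pexp (map_pmf g (bernoulli_pmf (1/2))) f = f (g True) / 2 + f (g False) / 2"
proof -
  have "finite (set_pmf (map_pmf g (bernoulli_pmf (1/2))))"
    by simp
  then show ?thesis by (simp add: pexp_integral)
qed

lemma pexp_bind:
  assumes fM: "finite (set_pmf M)" and fN: "\<forall>y\<in>set_pmf M. finite (set_pmf (N y))"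
  shows "pexp (bind_pmf M N) f = pexp M (\<lambda>y. pexp (N y) f)"
proof -
  define S where "S = (\<Union>y\<in>set_pmf M. set_pmf (N y))"
  have fS: "finite S" using fM fN by (auto simp: S_def)
  have pb: "pmf (bind_pmf M N) x = (\<Sum>y\<in>set_pmf M. pmf M y * pmf (N y) x)" for x
    unfolding pmf_bind
    by (subst integral_measure_pmf_real[of "set_pmf M"]) (auto simp: fM mult.commute)
  have "pexp (bind_pmf M N) f = (\<Sum>x\<in>S. pmf (bind_pmf M N) x * f x)"
    unfolding pexp_def S_def by simp
  also have "\<dots> = (\<Sum>x\<in>S. \<Sum>y\<in>set_pmf M. pmf M y * (pmf (N y) x * f x))"
    by (simp add: pb sum_distrib_right mult.assoc)
  also have "\<dots> = (\<Sum>y\<in>set_pmf M. pmf M y * (\<Sum>x\<in>S. pmf (N y) x * f x))"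
    by (subst sum.swap) (simp add: sum_distrib_left)
  also have "\<dots> = (\<Sum>y\<in>set_pmf M. pmf M y * pexp (N y) f)"
  proof (rule sum.cong[OF refl])
    fix y assume y: "y \<in> set_pmf M"
    have "(\<Sum>x\<in>S. pmf (N y) x * f x) = (\<Sum>x\<in>set_pmf (N y). pmf (N y) x * f x)"
      by (rule sum.mono_neutral_right) (use fS y in \<open>auto simp: S_def set_pmf_iff\<close>)
    then show "pmf M y * (\<Sum>x\<in>S. pmf (N y) x * f x) = pmf M y * pexp (N y) f"
      by (simp add: pexp_def)
  qed
  finally show ?thesis by (simp add: pexp_def)
qed

lemma beliefs_conv:
  assumes "a \<in> beliefs" "b \<in> beliefs" "0 \<le> l" "l \<le> 1"
  shows "(1 - l) *\<^sub>R a + l *\<^sub>R b \<in> beliefs"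
proof -
  have s: "(\<Sum>i\<in>UNIV. (1 - l) * a $ i + l * b $ i) = (1 - l) * (\<Sum>i\<in>UNIV. a $ i) + l * (\<Sum>i\<in>UNIV. b $ i)"
    by (simp add: sum.distrib sum_distrib_left)
  have sa: "(\<Sum>i\<in>UNIV. a $ i) = 1" and sb: "(\<Sum>i\<in>UNIV. b $ i) = 1"
    using assms(1,2) by (simp_all add: beliefs_def)
  have nn: "0 \<le> (1 - l) * a $ i + l * b $ i" for i
  proof -
    have "0 \<le> a $ i" "0 \<le> b $ i" using assms(1,2) by (simp_all add: beliefs_def)
    moreover have "0 \<le> 1 - l" using assms(4) by simp
    ultimately show ?thesis using assms(3) by (simp add: add_nonneg_nonneg mult_nonneg_nonneg)
  qed
  show ?thesis unfolding beliefs_def using nn s sa sb by simp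
qed

lemma convex_beliefs: "convex beliefs"
  unfolding convex_def
proof (intro ballI allI impI)
  fix x y :: "real^'n" and u v :: real
  assume x: "x \<in> beliefs" and y: "y \<in> beliefs" and u: "0 \<le> u" and v: "0 \<le> v" and uv: "u + v = 1"
  have "u = 1 - v" using uv by simp
  moreover have "(1 - v) *\<^sub>R x + v *\<^sub>R y \<in> beliefs"
    using beliefs_conv[OF x y v] u uv by simp
  ultimately show "u *\<^sub>R x + v *\<^sub>R y \<in> beliefs" by simp
qed

lemma eu_inner: "eu (\<lambda>a \<theta>. a $ \<theta>) y a = inner y a"
  unfolding eu_def inner_vec_def by simp

lemma inner_one: "y \<in> beliefs \<Longrightarrow> inner y (\<chi> i. 1) = 1"
  unfolding beliefs_def inner_vec_def by simp


lemma aux1: "(x::real) > 0 \<Longrightarrow> x = a - b \<Longrightarrow> k = (a + b) / 2 \<Longrightarrow> gm = a - k \<Longrightarrow> gm > 0"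
  by (simp add: field_simps)

lemma aux2: "(k::real) = (a + b) / 2 \<Longrightarrow> gm = a - k \<Longrightarrow> gn = b - k \<Longrightarrow> gn = - gm"
  by (simp add: field_simps)

theorem lemma2:
  fixes \<mu> :: "real^'n::finite" and \<phi> :: "real^'n \<Rightarrow> real^'n"
  assumes "CARD('n) \<ge> 2"
    and "\<mu> \<in> rel_interior beliefs"
    and "\<forall>x\<in>beliefs. \<phi> x \<in> beliefs"
    and "respects_blackwell \<mu> \<phi>"
    and "\<phi> \<mu> \<noteq> \<mu>"
  shows "\<exists>x\<in>beliefs. x \<noteq> \<mu> \<and> expansive_error \<mu> \<phi> x"
proof (rule ccontr)
  assume H: "\<not> (\<exists>x\<in>beliefs. x \<noteq> \<mu> \<and> expansive_error \<mu> \<phi> x)"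
  have mu: "\<mu> \<in> beliefs" using assms(2) rel_interior_subset by blast
  define \<nu> where "\<nu> = \<phi> \<mu>"
  have nu: "\<nu> \<in> beliefs" using assms(3) mu by (simp add: \<nu>_def)
  have nemu: "\<nu> \<noteq> \<mu>" using assms(5) by (simp add: \<nu>_def)
  define e where "e = \<nu> - \<mu>"
  have e0: "e \<noteq> 0" using nemu by (simp add: e_def)
  define p where "p s = \<mu> + s *\<^sub>R e" for s :: real
  have "\<nu> \<in> affine hull beliefs" using nu by (simp add: hull_inc)
  then obtain m where m: "m > 1" "(1 - m) *\<^sub>R \<nu> + m *\<^sub>R \<mu> \<in> beliefs"
    using convex_rel_interior_if2[OF convex_beliefs assms(2)] by blast
  define c where "c = m - 1"
  have c0: "c > 0" using m by (simp add: c_def)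
  have pc: "p (- c) \<in> beliefs"
  proof -
    have "p (- c) = (1 - m) *\<^sub>R \<nu> + m *\<^sub>R \<mu>"
      by (simp add: p_def e_def c_def algebra_simps)
    then show ?thesis using m by simp
  qed
  have pmem: "p s \<in> beliefs" if "- c \<le> s" "s \<le> 1" for s
  proof (cases "s \<le> 0")
    case True
    have peq: "p s = (1 - (- s / c)) *\<^sub>R \<mu> + (- s / c) *\<^sub>R p (- c)"
      using c0 by (simp add: p_def algebra_simps)
    moreover have "0 \<le> - s / c" "- s / c \<le> 1" using True that c0 by (auto simp: field_simps)
    ultimately have "(1 - (- s / c)) *\<^sub>R \<mu> + (- s / c) *\<^sub>R p (- c) \<in> beliefs"
      by (intro beliefs_conv[OF mu pc])
    then show ?thesis using peq by simp
  next
    case False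
    have "p s = (1 - s) *\<^sub>R \<mu> + s *\<^sub>R \<nu>"
      by (simp add: p_def e_def algebra_simps)
    then show ?thesis using beliefs_conv[OF mu nu, of s] False that by simp
  qed
  have pneq: "p s \<noteq> \<mu>" if "s \<noteq> 0" for s
    using that e0 by (simp add: p_def)
  define t where "t = min c (1/4) / 2"
  have t0: "t > 0" "2 * t \<le> c" "2 * t \<le> 1/4" using c0 by (auto simp: t_def)
  define one :: "real^'n" where "one = (\<chi> i. 1)"
  define d where "d = \<mu> - \<nu>"
  define k where "k = inner d (\<mu> + \<nu>) / 2"
  define a1 where "a1 = d - k *\<^sub>R one"
  define g where "g y = inner y a1" for y
  define G where "G = g \<mu>"
  have gmu: "g \<mu> = inner d \<mu> - k" using inner_one[OF mu]
    by (simp add: g_def a1_def one_def inner_diff_right inner_commute)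
  have gnu: "g \<nu> = inner d \<nu> - k" using inner_one[OF nu]
    by (simp add: g_def a1_def one_def inner_diff_right inner_commute)
  have dd: "inner d d > 0" using nemu by (simp add: d_def)
  have ddd: "inner d d = inner d \<mu> - inner d \<nu>" by (simp add: d_def inner_diff_right)
  have kk: "k = (inner d \<mu> + inner d \<nu>) / 2" by (simp add: k_def inner_add_right)
  have G0: "G > 0"
    unfolding G_def using aux1[OF dd ddd kk gmu] .
  have gnuG: "g \<nu> = - G"
    unfolding G_def using aux2[OF kk gmu gnu] .
  have gp: "g (p s) = G * (1 - 2 * s)" for s
  proof -
    have "g (p s) = g \<mu> + s * (g \<nu> - g \<mu>)"
      by (simp add: g_def p_def e_def inner_add_left inner_diff_left algebra_simps)
    then show ?thesis using gnuG by (simp add: G_def algebra_simps)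
  qed
  define u :: "real^'n \<Rightarrow> 'n \<Rightarrow> real" where "u = (\<lambda>a \<theta>. a $ \<theta>)"
  have euu: "eu u y a = inner y a" for y a unfolding u_def by (rule eu_inner)
  define A where "A = {a1, 0}"
  define astar where "astar y = (if 0 \<le> g y then a1 else 0)" for y
  define W where "W = Wval \<phi> u astar"
  have cc: "consistent_choice A u astar"
    unfolding consistent_choice_def A_def astar_def by (auto simp: euu g_def)
  have cont: "\<forall>\<theta>. continuous_on A (\<lambda>a. u a \<theta>)"
    unfolding u_def by (auto intro!: continuous_on_component continuous_on_id)
  have cpt: "compact A" unfolding A_def by simp
  have Wp: "W (p s) = G * (1 - 2 * s)" if "s \<noteq> 0" "- c \<le> s" "s \<le> 1/4" for s
  proof -
    have ps: "p s \<in> beliefs" using pmem that by simp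
    have "\<phi> (p s) \<in> closed_segment (p s) \<mu>"
      using H ps pneq[OF that(1)] by (auto simp: expansive_error_def)
    then obtain l where l: "0 \<le> l" "l \<le> 1" "\<phi> (p s) = (1 - l) *\<^sub>R p s + l *\<^sub>R \<mu>"
      by (auto simp: closed_segment_def)
    have "g (\<phi> (p s)) = (1 - l) * g (p s) + l * G"
      using l(3) by (simp add: g_def G_def inner_add_left)
    moreover have "g (p s) > 0" using gp G0 that by simp
    ultimately have "g (\<phi> (p s)) > 0" using l G0
      by (smt (verit) mult_nonneg_nonneg mult_pos_pos)
    then have "astar (\<phi> (p s)) = a1" by (simp add: astar_def)
    then show ?thesis by (simp add: W_def Wval_def euu gp[symmetric] g_def)
  qed
  have Wmu: "W \<mu> = 0"
  proof -
    have "astar (\<phi> \<mu>) = 0" using gnuG G0 by (simp add: astar_def \<nu>_def[symmetric])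
    then show ?thesis by (simp add: W_def Wval_def euu)
  qed
  define \<rho>' where "\<rho>' = map_pmf (\<lambda>b. if b then p t else p (- t)) (bernoulli_pmf (1/2))"
  define K where "K y = map_pmf (\<lambda>b. if b then \<mu> else 2 *\<^sub>R y - \<mu>) (bernoulli_pmf (1/2))" for y
  define \<rho> where "\<rho> = bind_pmf \<rho>' K"
  have p2: "2 *\<^sub>R p s - \<mu> = p (2 * s)" for s by (simp add: p_def vec_eq_iff algebra_simps)
  have setr': "set_pmf \<rho>' \<subseteq> {p t, p (- t)}" unfolding \<rho>'_def by auto
  have finr': "finite (set_pmf \<rho>')" unfolding \<rho>'_def by simp
  have finK: "finite (set_pmf (K y))" for y unfolding K_def by simp
  have setK: "set_pmf (K y) \<subseteq> {\<mu>, 2 *\<^sub>R y - \<mu>}" for y unfolding K_def by auto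
  have meanK: "pmean (K y) = y" for y
  proof -
    have "pmean (K y) $ i = \<mu> $ i / 2 + (2 * y $ i - \<mu> $ i) / 2" for i
      by (simp add: pmean_comp K_def pexp_bern)
    then show ?thesis by (simp add: vec_eq_iff field_simps)
  qed
  have pts: "p t \<in> beliefs" "p (- t) \<in> beliefs" "p (2 * t) \<in> beliefs" "p (- (2 * t)) \<in> beliefs"
    using t0 c0 by (auto intro!: pmem)
  have setKb: "set_pmf (K y) \<subseteq> beliefs" if "y \<in> set_pmf \<rho>'" for y
  proof -
    have "y = p t \<or> y = p (- t)" using that setr' by auto
    then have "2 *\<^sub>R y - \<mu> \<in> beliefs" using p2[of t] p2[of "- t"] pts by auto
    then show ?thesis using setK[of y] mu by auto
  qed
  have Ki: "pexp (K y) (\<lambda>x. x $ i) = y $ i" for y i by (metis meanK pmean_comp)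
  have post': "posterior_dist \<mu> \<rho>'"
  proof -
    have "pmean \<rho>' $ i = (\<mu> $ i + t * e $ i) / 2 + (\<mu> $ i - t * e $ i) / 2" for i
      by (simp add: pmean_comp \<rho>'_def pexp_bern p_def)
    then have "pmean \<rho>' = \<mu>" by (simp add: vec_eq_iff field_simps)
    then show ?thesis unfolding posterior_dist_def using finr' setr' pts by auto
  qed
  have post: "posterior_dist \<mu> \<rho>"
    unfolding posterior_dist_def
  proof (intro conjI)
    show "finite (set_pmf \<rho>)" using finr' finK by (simp add: \<rho>_def)
    show "set_pmf \<rho> \<subseteq> beliefs" using setKb by (auto simp: \<rho>_def)
    show "pmean \<rho> = \<mu>"
    proof -
      have "pmean \<rho> $ i = \<mu> $ i" for i
      proof -
        have "pmean \<rho> $ i = pexp \<rho>' (\<lambda>y. pexp (K y) (\<lambda>x. x $ i))"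
          by (simp add: pmean_comp \<rho>_def pexp_bind finr' finK)
        also have "\<dots> = pexp \<rho>' (\<lambda>y. y $ i)"
          using Ki by simp
        also have "\<dots> = \<mu> $ i" using post' by (simp add: posterior_dist_def pmean_comp[symmetric])
        finally show ?thesis .
      qed
      then show ?thesis by (simp add: vec_eq_iff)
    qed
  qed
  have mpc: "mp_contraction \<rho>' \<rho>"
    unfolding mp_contraction_def \<rho>_def
    by (rule exI[of _ K]) (use finK setKb meanK in auto)
  have prem: "compact A \<and> (\<forall>\<theta>. continuous_on A (\<lambda>a. u a \<theta>)) \<and> consistent_choice A u astar
        \<and> posterior_dist \<mu> \<rho> \<and> posterior_dist \<mu> \<rho>' \<and> mp_contraction \<rho>' \<rho>"
    using cc cont cpt post post' mpc by (intro conjI)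
  note rb = assms(4)[unfolded respects_blackwell_def, THEN spec[of _ A], THEN spec[of _ u],
      THEN spec[of _ astar], THEN spec[of _ \<rho>], THEN spec[of _ \<rho>']]
  have ge: "pexp \<rho> W \<ge> pexp \<rho>' W"
    using mp[OF rb prem] unfolding W_def .
  have W1: "W (p t) = G * (1 - 2 * t)" using t0 c0 by (intro Wp) auto
  have W2: "W (p (- t)) = G * (1 - 2 * (- t))" using t0 c0 by (intro Wp) auto
  have W3: "W (p (2 * t)) = G * (1 - 2 * (2 * t))" using t0 c0 by (intro Wp) auto
  have W4: "W (p (- (2 * t))) = G * (1 - 2 * (- (2 * t)))" using t0 c0 by (intro Wp) auto
  have e1: "pexp \<rho>' W = G"
  proof -
    have "pexp \<rho>' W = W (p t) / 2 + W (p (- t)) / 2"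
      unfolding \<rho>'_def by (rule pexp_bern[where g="\<lambda>b. if b then p t else p (- t)", simplified])
    then show ?thesis unfolding W1 W2 by (simp add: field_simps)
  qed
  have pK: "pexp (K y) W = W \<mu> / 2 + W (2 *\<^sub>R y - \<mu>) / 2" for y
    unfolding K_def by (rule pexp_bern[where g="\<lambda>b. if b then \<mu> else 2 *\<^sub>R y - \<mu>", simplified])
  have e2: "pexp \<rho> W = G / 2"
  proof -
    have "pexp \<rho> W = pexp \<rho>' (\<lambda>y. pexp (K y) W)"
      unfolding \<rho>_def by (rule pexp_bind[OF finr']) (simp add: finK)
    also have "\<dots> = pexp (K (p t)) W / 2 + pexp (K (p (- t))) W / 2"
      unfolding \<rho>'_def by (rule pexp_bern[where g="\<lambda>b. if b then p t else p (- t)", simplified])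
    also have "\<dots> = (W \<mu> / 2 + W (p (2 * t)) / 2) / 2 + (W \<mu> / 2 + W (p (2 * (- t))) / 2) / 2"
      unfolding pK p2 ..
    also have "\<dots> = G / 2"
      unfolding Wmu W3 mult_minus_right W4 by (simp add: field_simps)
    finally show ?thesis .
  qed
  show False using ge e1 e2 G0 by simp
qed

end
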